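(* Let $t\in\{1,\dots,T\}$, and suppose that every component of the vector $\sum_{i=0}^{t-1}\Delta_i^{t}\in\mathbb{R}^p$ is nonzero. Then \[ \frac{\left\|\theta_{t}^{BP}-\theta_{t}^{\lambda}\right\|_2}{\left\|\theta_{t}^{BP}-\theta_{0}\right\|_2}\;\longrightarrow\;0 \qquad\text{as } \alpha\to 0^+ . \]
   Context: Fix integers $d,p\ge 1$ and a horizon $T\ge 1$. A recurrent network with a differentiable transition map $f$ and fixed inputs $x_1,\dots,x_T$ produces hidden states $h_0,h_1,\dots,h_T\in\mathbb{R}^d$ via $h_t=f(x_t,h_{t-1})$ (network parameters are held fixed). For $1\le t\le T$ there is a loss $L_t=\ell_t(h_t)$ with $\ell_t$ differentiable. For $0\le s\le\tau\le T$, $\partial h_\tau/\partial h_s\in\mathbb{R}^{d\times d}$ denotes the Jacobian of $h_\tau$ viewed as a function of $h_s$ through the recursion (the identity if $\tau=s$), and for $s<\tau$, $\partial L_\tau/\partial h_s\in\mathbb{R}^d$ is the gradient of $L_\tau$ viewed as a function of $h_s$. For $v\in\mathbb{R}^d$, the notation $v^\top \partial h_\tau/\partial h_s$ denotes the vector $(\partial h_\tau/\partial h_s)^\top v\in\mathbb{R}^d$. A "synthesiser" is a map $g:\mathbb{R}^d\times\mathbb{R}^p\to\mathbb{R}^d$, $(h,\theta)\mapsto g(h;\theta)$, continuously differentiable in $\theta$, with $\nabla_\theta g(h;\theta)\in\mathbb{R}^{d\times p}$ its Jacobian with respect to $\theta$. Fix $\gamma,\lambda\in[0,1]$, an initial weight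 vector $\theta_0\in\mathbb{R}^p$, and a learning rate $\alpha>0$; all quantities below except the data depend on $\alpha$. Conventions: $0^0=1$. $n$-step and interim $\lambda$-weighted synthetic gradients relative to a sequence of weight vectors $(\vartheta_i)$: for $k\ge 0$, $n\ge1$, $k+n\le T$, $G_k^{(n)}=\sum_{\tau=1}^{n}\gamma^{\tau-1}\frac{\partial L_{k+\tau}}{\partial h_k}+\gamma^{n}\,g(h_{k+n};\vartheta_{k+n-1})^\top\frac{\partial h_{k+n}}{\partial h_k}$, and for $0\le k<H\le T$, $G_k^{\lambda\mid H}=(1-\lambda)\sum_{n=1}^{H-k-1}\lambda^{n-1}G_k^{(n)}+\lambda^{H-k-1}G_k^{(H-k)}$. Accumulate $\mathrm{BP}(\lambda)$: set $e_{-1}=0\in\mathbb{R}^{d\times p}$ and, starting from $\theta_0$, for $t=0,1,\dots,T-1$: $e_t=\gamma\lambda\,\frac{\partial h_t}{\partial h_{t-1}}e_{t-1}+\nabla_\theta g(h_t;\theta_t)$ (the first term is zero for $t=0$), $\delta_t=\frac{\partial L_{t+1}}{\partial h_t}+\gamma\, g(h_{t+1};\theta_t)^\top\frac{\partial h_{t+1}}{\partial h_t}-g(h_t;\theta_t)\in\mathbb{R}^d$, and $\theta_{t+1}=\theta_t+\alpha\, e_t^\top\delta_t$. Write $\theta_t^{BP}$ for the vector $\theta_t$ so produced. Online $\lambda$-SG algorithm: for each horizon $t\in\{1,\dots,T\}$ set $\theta_0^t=\theta_0$ and for $k=0,\dots,t-1$, $\theta_{k+1}^t=\theta_k^t+\alpha\,\nabla_\theta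 g(h_k;\theta_k^t)^\top\big(G_k^{\lambda\mid t}-g(h_k;\theta_k^t)\big)$, where $G_k^{\lambda\mid t}$ is computed relative to the sequence $\vartheta_i=\theta_i^i$ (with $\theta_0^0=\theta_0$). Write $\theta_t^{\lambda}:=\theta_t^t$. Finally, $\bar G_i^{\lambda\mid t}$ denotes the interim $\lambda$-weighted synthetic gradient computed relative to the constant sequence $\vartheta_j=\theta_0$, and $\Delta_i^t:=\nabla_\theta g(h_i;\theta_0)^\top\big(\bar G_i^{\lambda\mid t}-g(h_i;\theta_0)\big)\in\mathbb{R}^p$. *)

theory Defs
  imports "HOL-Analysis.Analysis"
begin

definition grad :: "(real^'d \<Rightarrow> real) \<Rightarrow> real^'d \<Rightarrow> real^'d" where
  "grad F z = (\<chi> i. frechet_derivative F (at z) (axis i 1))"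

(* flow f x s \<tau>: the map h_s \<mapsto> h_\<tau> through the recursion h_t = f(x_t, h_{t-1});
   identity for \<tau> \<le> s. *)
primrec flow :: "('x \<Rightarrow> real^'d \<Rightarrow> real^'d) \<Rightarrow> (nat \<Rightarrow> 'x) \<Rightarrow> nat \<Rightarrow> nat \<Rightarrow> real^'d \<Rightarrow> real^'d" where
  "flow f x s 0 = id"
| "flow f x s (Suc \<tau>) = (if Suc \<tau> \<le> s then id else f (x (Suc \<tau>)) \<circ> flow f x s \<tau>)"

definition hid :: "('x \<Rightarrow> real^'d \<Rightarrow> real^'d) \<Rightarrow> (nat \<Rightarrow> 'x) \<Rightarrow> real^'d \<Rightarrow> nat \<Rightarrow> real^'d" where
  "hid f x h0 t = flow f x 0 t h0"

definition dh :: "('x \<Rightarrow> real^'d \<Rightarrow> real^'d) \<Rightarrow> (nat \<Rightarrow> 'x) \<Rightarrow> real^'d \<Rightarrow> nat \<Rightarrow> nat \<Rightarrow> real^'d^'d" where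
  "dh f x h0 \<tau> s = jacobian (flow f x s \<tau>) (at (hid f x h0 s))"

definition dL :: "('x \<Rightarrow> real^'d \<Rightarrow> real^'d) \<Rightarrow> (nat \<Rightarrow> 'x) \<Rightarrow> real^'d \<Rightarrow> (nat \<Rightarrow> real^'d \<Rightarrow> real)
                  \<Rightarrow> nat \<Rightarrow> nat \<Rightarrow> real^'d" where
  "dL f x h0 ell \<tau> s = grad (ell \<tau> \<circ> flow f x s \<tau>) (hid f x h0 s)"

definition dg :: "(real^'d \<Rightarrow> real^'p \<Rightarrow> real^'d) \<Rightarrow> real^'d \<Rightarrow> real^'p \<Rightarrow> real^'p^'d" where
  "dg g h \<theta> = jacobian (g h) (at \<theta>)"

definition Gn :: "('x \<Rightarrow> real^'d \<Rightarrow> real^'d) \<Rightarrow> (nat \<Rightarrow> 'x) \<Rightarrow> real^'d \<Rightarrow> (nat \<Rightarrow> real^'d \<Rightarrow> real)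
                  \<Rightarrow> (real^'d \<Rightarrow> real^'p \<Rightarrow> real^'d) \<Rightarrow> real \<Rightarrow> (nat \<Rightarrow> real^'p) \<Rightarrow> nat \<Rightarrow> nat \<Rightarrow> real^'d" where
  "Gn f x h0 ell g \<gamma> vth k n =
     (\<Sum>\<tau>=1..n. \<gamma> ^ (\<tau> - 1) *\<^sub>R dL f x h0 ell (k + \<tau>) k)
     + \<gamma> ^ n *\<^sub>R (transpose (dh f x h0 (k + n) k) *v g (hid f x h0 (k + n)) (vth (k + n - 1)))"

definition Glam :: "('x \<Rightarrow> real^'d \<Rightarrow> real^'d) \<Rightarrow> (nat \<Rightarrow> 'x) \<Rightarrow> real^'d \<Rightarrow> (nat \<Rightarrow> real^'d \<Rightarrow> real)
                  \<Rightarrow> (real^'d \<Rightarrow> real^'p \<Rightarrow> real^'d) \<Rightarrow> real \<Rightarrow> real \<Rightarrow> (nat \<Rightarrow> real^'p) \<Rightarrow> nat \<Rightarrow> nat \<Rightarrow> real^'d" where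
  "Glam f x h0 ell g \<gamma> lam vth k H =
     (1 - lam) *\<^sub>R (\<Sum>n=1..H - k - 1. lam ^ (n - 1) *\<^sub>R Gn f x h0 ell g \<gamma> vth k n)
     + lam ^ (H - k - 1) *\<^sub>R Gn f x h0 ell g \<gamma> vth k (H - k)"

(* Accumulate BP(\<lambda>): bpstate t = (e_{t-1}, \<theta>_t) *)
primrec bpstate :: "('x \<Rightarrow> real^'d \<Rightarrow> real^'d) \<Rightarrow> (nat \<Rightarrow> 'x) \<Rightarrow> real^'d \<Rightarrow> (nat \<Rightarrow> real^'d \<Rightarrow> real)
                  \<Rightarrow> (real^'d \<Rightarrow> real^'p \<Rightarrow> real^'d) \<Rightarrow> real \<Rightarrow> real \<Rightarrow> real \<Rightarrow> real^'p \<Rightarrow> nat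
                  \<Rightarrow> (real^'p^'d) \<times> (real^'p)" where
  "bpstate f x h0 ell g \<gamma> lam \<alpha> \<theta>0 0 = (0, \<theta>0)"
| "bpstate f x h0 ell g \<gamma> lam \<alpha> \<theta>0 (Suc t) =
     (let e_prev = fst (bpstate f x h0 ell g \<gamma> lam \<alpha> \<theta>0 t);
          \<theta> = snd (bpstate f x h0 ell g \<gamma> lam \<alpha> \<theta>0 t);
          e = (if t = 0 then dg g (hid f x h0 t) \<theta>
               else (\<gamma> * lam) *\<^sub>R (dh f x h0 t (t - 1) ** e_prev) + dg g (hid f x h0 t) \<theta>);
          \<delta> = dL f x h0 ell (t + 1) t
              + \<gamma> *\<^sub>R (transpose (dh f x h0 (t + 1) t) *v g (hid f x h0 (t + 1)) \<theta>)
              - g (hid f x h0 t) \<theta>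
      in (e, \<theta> + \<alpha> *\<^sub>R (transpose e *v \<delta>)))"

definition thetaBP where
  "thetaBP f x h0 ell g \<gamma> lam \<alpha> \<theta>0 t = snd (bpstate f x h0 ell g \<gamma> lam \<alpha> \<theta>0 t)"

(* Online \<lambda>-SG, inner loop for horizon t, relative to the weight sequence vth:
   sginner ... t vth k = \<theta>_k^t *)
primrec sginner :: "('x \<Rightarrow> real^'d \<Rightarrow> real^'d) \<Rightarrow> (nat \<Rightarrow> 'x) \<Rightarrow> real^'d \<Rightarrow> (nat \<Rightarrow> real^'d \<Rightarrow> real)
                  \<Rightarrow> (real^'d \<Rightarrow> real^'p \<Rightarrow> real^'d) \<Rightarrow> real \<Rightarrow> real \<Rightarrow> real \<Rightarrow> real^'p
                  \<Rightarrow> nat \<Rightarrow> (nat \<Rightarrow> real^'p) \<Rightarrow> nat \<Rightarrow> real^'p" where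
  "sginner f x h0 ell g \<gamma> lam \<alpha> \<theta>0 t vth 0 = \<theta>0"
| "sginner f x h0 ell g \<gamma> lam \<alpha> \<theta>0 t vth (Suc k) =
     (let \<theta> = sginner f x h0 ell g \<gamma> lam \<alpha> \<theta>0 t vth k
      in \<theta> + \<alpha> *\<^sub>R (transpose (dg g (hid f x h0 k) \<theta>)
                      *v (Glam f x h0 ell g \<gamma> lam vth k t - g (hid f x h0 k) \<theta>)))"

(* sgseq ... n i = \<theta>_i^i for i \<le> n (the horizon-t run only uses indices \<le> t-1);
   entries above n are unused placeholders. *)
primrec sgseq :: "('x \<Rightarrow> real^'d \<Rightarrow> real^'d) \<Rightarrow> (nat \<Rightarrow> 'x) \<Rightarrow> real^'d \<Rightarrow> (nat \<Rightarrow> real^'d \<Rightarrow> real)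
                  \<Rightarrow> (real^'d \<Rightarrow> real^'p \<Rightarrow> real^'d) \<Rightarrow> real \<Rightarrow> real \<Rightarrow> real \<Rightarrow> real^'p
                  \<Rightarrow> nat \<Rightarrow> nat \<Rightarrow> real^'p" where
  "sgseq f x h0 ell g \<gamma> lam \<alpha> \<theta>0 0 = (\<lambda>i. \<theta>0)"
| "sgseq f x h0 ell g \<gamma> lam \<alpha> \<theta>0 (Suc n) =
     (let vth = sgseq f x h0 ell g \<gamma> lam \<alpha> \<theta>0 n
      in vth(Suc n := sginner f x h0 ell g \<gamma> lam \<alpha> \<theta>0 (Suc n) vth (Suc n)))"

definition thetaLam where
  "thetaLam f x h0 ell g \<gamma> lam \<alpha> \<theta>0 t = sgseq f x h0 ell g \<gamma> lam \<alpha> \<theta>0 t t"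

definition Delta where
  "Delta f x h0 ell g \<gamma> lam \<theta>0 i t =
     transpose (dg g (hid f x h0 i) \<theta>0)
       *v (Glam f x h0 ell g \<gamma> lam (\<lambda>j. \<theta>0) i t - g (hid f x h0 i) \<theta>0)"

end

theory Submission
  imports Defs
begin


context
  fixes f :: "'x \<Rightarrow> real^'d \<Rightarrow> real^'d"
    and x :: "nat \<Rightarrow> 'x"
    and h0 :: "real^'d"
    and ell :: "nat \<Rightarrow> real^'d \<Rightarrow> real"
    and T :: nat
  assumes f_diff: "\<And>\<tau> z. \<tau> \<in> {1..T} \<Longrightarrow> f (x \<tau>) differentiable (at z)"
    and ell_diff: "\<And>\<tau> z. \<tau> \<in> {1..T} \<Longrightarrow> ell \<tau> differentiable (at z)"
begin

lemma flow_diff: "\<tau> \<le> T \<Longrightarrow> flow f x s \<tau> differentiable (at z)"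
proof (induction \<tau> arbitrary: z)
  case 0 then show ?case by simp
next
  case (Suc \<tau>)
  have "f (x (Suc \<tau>)) \<circ> flow f x s \<tau> differentiable (at z)"
    using Suc f_diff[of "Suc \<tau>"] by (intro differentiable_chain_at) auto
  then show ?case by (simp add: id_def)
qed

lemma flow_same: "flow f x k k = id"
  by (cases k) auto

lemma flow_comp: "i \<le> k \<Longrightarrow> k \<le> \<tau> \<Longrightarrow> flow f x i \<tau> = flow f x k \<tau> \<circ> flow f x i k"
proof (induction \<tau>)
  case 0 then show ?case by simp
next
  case (Suc \<tau>)
  show ?case
  proof (cases "k = Suc \<tau>")
    case True then show ?thesis by (simp add: flow_same)
  next
    case False
    then have "k \<le> \<tau>" using Suc by simp
    then show ?thesis using Suc by (auto simp: o_assoc)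
  qed
qed

lemma flow_hid: "i \<le> k \<Longrightarrow> flow f x i k (hid f x h0 i) = hid f x h0 k"
  unfolding hid_def using flow_comp[of 0 i k] by simp

lemma jac_comp:
  fixes A :: "real^'d \<Rightarrow> real^'d" and B :: "real^'d \<Rightarrow> real^'d"
  assumes "A differentiable (at (B z))" "B differentiable (at z)"
  shows "jacobian (A \<circ> B) (at z) = jacobian A (at (B z)) ** jacobian B (at z)"
proof -
  have "frechet_derivative (A \<circ> B) (at z) = frechet_derivative A (at (B z)) \<circ> frechet_derivative B (at z)"
    using assms by (simp add: frechet_derivative_compose)
  moreover have "linear (frechet_derivative A (at (B z)))" "linear (frechet_derivative B (at z))"
    using assms frechet_derivative_works has_derivative_linear by blast+
  ultimately show ?thesis unfolding jacobian_def by (simp add: matrix_compose)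
qed

lemma dh_comp: "i \<le> k \<Longrightarrow> k \<le> \<tau> \<Longrightarrow> \<tau> \<le> T \<Longrightarrow>
   dh f x h0 \<tau> i = dh f x h0 \<tau> k ** dh f x h0 k i"
  unfolding dh_def
  using flow_comp[of i k \<tau>] flow_hid[of i k] jac_comp[of "flow f x k \<tau>" "flow f x i k" "hid f x h0 i"]
    flow_diff by simp

lemma dh_id: "dh f x h0 i i = mat 1"
proof -
  have "(id has_derivative id) (at z)" for z :: "real^'d" by (simp add: has_derivative_id[unfolded id_def] id_def)
  then have "frechet_derivative id (at z) = id" for z :: "real^'d"
    by (metis frechet_derivative_at)
  then show ?thesis unfolding dh_def jacobian_def by (simp add: flow_same matrix_id_mat_1)
qed

lemma lin_expand:
  fixes F :: "real^'d \<Rightarrow> real"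
  assumes "linear F"
  shows "F v = (\<Sum>i\<in>UNIV. v $ i * F (axis i 1))"
proof -
  have "F v = F (\<Sum>i\<in>UNIV. (v $ i) *\<^sub>R axis i 1)"
    using basis_expansion[of v] by (simp add: scalar_mult_eq_scaleR)
  also have "\<dots> = (\<Sum>i\<in>UNIV. v $ i * F (axis i 1))"
    using assms by (simp add: linear_sum linear_scale)
  finally show ?thesis .
qed

lemma grad_comp:
  fixes A :: "real^'d \<Rightarrow> real" and B :: "real^'d \<Rightarrow> real^'d"
  assumes "A differentiable (at (B z))" "B differentiable (at z)"
  shows "grad (A \<circ> B) z = transpose (jacobian B (at z)) *v grad A (B z)"
proof -
  let ?DA = "frechet_derivative A (at (B z))"
  let ?DB = "frechet_derivative B (at z)"
  have lA: "linear ?DA" using assms frechet_derivative_works has_derivative_linear by blast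
  have hB: "(B has_derivative (\<lambda>h. jacobian B (at z) *v h)) (at z)"
    using assms jacobian_works by blast
  have DB: "?DB = (\<lambda>h. jacobian B (at z) *v h)"
    using frechet_derivative_at[OF hB] by simp
  have "frechet_derivative (A \<circ> B) (at z) = ?DA \<circ> ?DB"
    using assms by (simp add: frechet_derivative_compose)
  moreover have "(jacobian B (at z) *v axis i 1) $ l = jacobian B (at z) $ l $ i" for i l
    by (simp add: matrix_vector_mult_def axis_def if_distrib cong: if_cong)
  ultimately have "?DA (jacobian B (at z) *v axis i 1) = (\<Sum>l\<in>UNIV. jacobian B (at z) $ l $ i * ?DA (axis l 1))" for i
    using lin_expand[OF lA, of "jacobian B (at z) *v axis i 1"] by simp
  then show ?thesis
    unfolding grad_def DB using \<open>frechet_derivative (A \<circ> B) (at z) = ?DA \<circ> ?DB\<close>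
    by (simp add: vec_eq_iff DB matrix_vector_mult_def transpose_def mult.commute)
qed

lemma dL_comp: "i \<le> k \<Longrightarrow> k \<le> \<tau> \<Longrightarrow> \<tau> \<le> T \<Longrightarrow> 1 \<le> \<tau> \<Longrightarrow>
   dL f x h0 ell \<tau> i = transpose (dh f x h0 k i) *v dL f x h0 ell \<tau> k"
proof -
  assume a: "i \<le> k" "k \<le> \<tau>" "\<tau> \<le> T" "1 \<le> \<tau>"
  have "ell \<tau> \<circ> flow f x i \<tau> = (ell \<tau> \<circ> flow f x k \<tau>) \<circ> flow f x i k"
    using flow_comp[of i k \<tau>] a by (simp add: o_assoc)
  moreover have "(ell \<tau> \<circ> flow f x k \<tau>) differentiable (at z)" for z
    using a ell_diff flow_diff by (intro differentiable_chain_at) auto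
  ultimately show ?thesis
    unfolding dL_def dh_def using grad_comp[of "ell \<tau> \<circ> flow f x k \<tau>" "flow f x i k" "hid f x h0 i"]
      flow_diff[of k] flow_hid[of i k] a by simp
qed

end



lemma lam_return:
  fixes r u :: "nat \<Rightarrow> 'a::real_vector" and \<gamma> lam :: real
  defines "GN \<equiv> (\<lambda>n. (\<Sum>\<tau>=1..n. \<gamma>^(\<tau>-1) *\<^sub>R r \<tau>) + \<gamma>^n *\<^sub>R u n)"
  shows "(1-lam) *\<^sub>R (\<Sum>n=1..N. lam^(n-1) *\<^sub>R GN n) + lam^N *\<^sub>R GN (Suc N) - u 0
     = (\<Sum>m<Suc N. (\<gamma>*lam)^m *\<^sub>R (r (Suc m) + \<gamma> *\<^sub>R u (Suc m) - u m))"
proof (induction N)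
  case 0
  then show ?case by (simp add: GN_def)
next
  case (Suc N)
  have d: "GN (Suc (Suc N)) = GN (Suc N) + \<gamma>^(Suc N) *\<^sub>R (r (Suc (Suc N)) + \<gamma> *\<^sub>R u (Suc (Suc N)) - u (Suc N))"
    by (simp add: GN_def algebra_simps)
  have "(1-lam) *\<^sub>R (\<Sum>n=1..Suc N. lam^(n-1) *\<^sub>R GN n) + lam^(Suc N) *\<^sub>R GN (Suc (Suc N)) - u 0
      = ((1-lam) *\<^sub>R (\<Sum>n=1..N. lam^(n-1) *\<^sub>R GN n) + lam^N *\<^sub>R GN (Suc N) - u 0)
        + lam^(Suc N) *\<^sub>R \<gamma>^(Suc N) *\<^sub>R (r (Suc (Suc N)) + \<gamma> *\<^sub>R u (Suc (Suc N)) - u (Suc N))"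
    unfolding d by (simp add: algebra_simps)
  also have "\<dots> = (\<Sum>m<Suc (Suc N). (\<gamma>*lam)^m *\<^sub>R (r (Suc m) + \<gamma> *\<^sub>R u (Suc m) - u m))"
    using Suc.IH by (simp add: power_mult_distrib mult.commute)
  finally show ?case .
qed




lemma tendsto_mv [tendsto_intros]:
  fixes A :: "'a \<Rightarrow> real^'n^'m" and v :: "'a \<Rightarrow> real^'n"
  assumes "(A \<longlongrightarrow> A0) F" "(v \<longlongrightarrow> v0) F"
  shows "((\<lambda>a. A a *v v a) \<longlongrightarrow> A0 *v v0) F"
  unfolding matrix_vector_mult_def
  by (intro tendsto_intros assms)

lemma tendsto_mm [tendsto_intros]:
  fixes A :: "'a \<Rightarrow> real^'n^'m" and B :: "'a \<Rightarrow> real^'k^'n"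
  assumes "(A \<longlongrightarrow> A0) F" "(B \<longlongrightarrow> B0) F"
  shows "((\<lambda>a. A a ** B a) \<longlongrightarrow> A0 ** B0) F"
  unfolding matrix_matrix_mult_def
  by (intro tendsto_intros assms)

lemma tendsto_transpose [tendsto_intros]:
  fixes A :: "'a \<Rightarrow> real^'n^'m"
  assumes "(A \<longlongrightarrow> A0) F"
  shows "((\<lambda>a. transpose (A a)) \<longlongrightarrow> transpose A0) F"
  unfolding transpose_def
  by (intro tendsto_intros assms)

lemma tmv_add: "transpose (A + B) *v v = transpose A *v v + transpose B *v (v::real^'m)"
  for A B :: "real^'n^'m"
  by (simp del: transpose_matrix_vector add: vec_eq_iff matrix_vector_mult_def transpose_def sum.distrib algebra_simps)

lemma tmv_scale: "transpose (c *\<^sub>R A) *v v = c *\<^sub>R (transpose A *v (v::real^'m))"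
  for A :: "real^'n^'m"
  by (simp del: transpose_matrix_vector add: vec_eq_iff matrix_vector_mult_def transpose_def sum_distrib_left algebra_simps)

lemma tmv_mul: "transpose (A ** B) *v v = transpose B *v (transpose A *v v)"
  for A :: "real^'n^'m" and B :: "real^'k^'n"
  unfolding matrix_transpose_mul by (rule matrix_vector_mul_assoc[symmetric])

lemma tz: "transpose (0::real^'n^'m) *v v = 0"
  by (simp del: transpose_matrix_vector add: vec_eq_iff transpose_def matrix_vector_mult_def)

lemma tmv_sum: "transpose (\<Sum>i\<in>I. A i) *v v = (\<Sum>i\<in>I. transpose (A i) *v (v::real^'m))"
  for A :: "'i \<Rightarrow> real^'n^'m"
  by (induction I rule: infinite_finite_induct) (auto simp del: transpose_matrix_vector simp: tmv_add tz)

lemma mv_sum: "A *v (\<Sum>i\<in>I. v i) = (\<Sum>i\<in>I. A *v v i)"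
  for A :: "real^'n^'m"
  by (induction I rule: infinite_finite_induct) (auto simp: matrix_vector_right_distrib)

lemma mv_scale: "A *v (c *\<^sub>R v) = c *\<^sub>R (A *v v)"
  for A :: "real^'n^'m"
  by (simp add: vec_eq_iff matrix_vector_mult_def sum_distrib_left algebra_simps)

lemma sum_tri_swap:
  fixes F :: "nat \<Rightarrow> nat \<Rightarrow> 'a::comm_monoid_add"
  shows "(\<Sum>k<n. \<Sum>i\<le>k. F i k) = (\<Sum>i<n. \<Sum>k\<in>{i..<n}. F i k)"
proof (induction n)
  case 0 then show ?case by simp
next
  case (Suc n)
  have "(\<Sum>i<Suc n. \<Sum>k\<in>{i..<Suc n}. F i k) = (\<Sum>i<Suc n. (\<Sum>k\<in>{i..<n}. F i k) + F i n)"
    by (intro sum.cong) auto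
  also have "\<dots> = (\<Sum>i<n. \<Sum>k\<in>{i..<n}. F i k) + (\<Sum>i<Suc n. F i n)"
    by (simp add: sum.distrib)
  moreover have "(\<Sum>k<Suc n. \<Sum>i\<le>k. F i k) = (\<Sum>k<n. \<Sum>i\<le>k. F i k) + (\<Sum>i\<le>n. F i n)"
    by (simp only: sum.lessThan_Suc)
  moreover have "(\<Sum>i<Suc n. F i n) = (\<Sum>i\<le>n. F i n)"
    by (simp only: lessThan_Suc_atMost)
  ultimately show ?case using Suc by (metis sum.lessThan_Suc)
qed




context
  fixes f :: "'x \<Rightarrow> real^'d \<Rightarrow> real^'d"
    and x :: "nat \<Rightarrow> 'x"
    and h0 :: "real^'d"
    and ell :: "nat \<Rightarrow> real^'d \<Rightarrow> real"
    and g :: "real^'d \<Rightarrow> real^'p \<Rightarrow> real^'d"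
    and \<gamma> lam :: real
    and \<theta>0 :: "real^'p"
    and T :: nat
  assumes f_diff: "\<And>\<tau> z. \<tau> \<in> {1..T} \<Longrightarrow> f (x \<tau>) differentiable (at z)"
    and ell_diff: "\<And>\<tau> z. \<tau> \<in> {1..T} \<Longrightarrow> ell \<tau> differentiable (at z)"
    and g_diff: "\<And>h \<theta>. g h differentiable (at \<theta>)"
    and g_C1: "\<And>h. continuous_on UNIV (\<lambda>\<theta>. dg g h \<theta>)"
begin

lemma g_tendsto [tendsto_intros]: "(\<theta> \<longlongrightarrow> \<theta>1) F \<Longrightarrow> ((\<lambda>a. g h (\<theta> a)) \<longlongrightarrow> g h \<theta>1) F"
  using g_diff[of h \<theta>1] differentiable_imp_continuous_within isCont_tendsto_compose by blast

lemma dg_tendsto [tendsto_intros]: "(\<theta> \<longlongrightarrow> \<theta>1) F \<Longrightarrow> ((\<lambda>a. dg g h (\<theta> a)) \<longlongrightarrow> dg g h \<theta>1) F"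
  using g_C1[of h] continuous_on_eq_continuous_at[of UNIV] isCont_tendsto_compose[of \<theta>1 "dg g h"]
  by auto

abbreviation "BS \<alpha> k \<equiv> bpstate f x h0 ell g \<gamma> lam \<alpha> \<theta>0 k"

lemma BS_cont: "((\<lambda>\<alpha>. BS \<alpha> k) \<longlongrightarrow> BS 0 k) (at_right 0)"
proof (induction k)
  case 0 then show ?case by simp
next
  case (Suc k)
  have e: "((\<lambda>\<alpha>. fst (BS \<alpha> k)) \<longlongrightarrow> fst (BS 0 k)) (at_right 0)"
    and th: "((\<lambda>\<alpha>. snd (BS \<alpha> k)) \<longlongrightarrow> snd (BS 0 k)) (at_right 0)"
    using Suc by (auto intro: tendsto_fst tendsto_snd)
  have a: "((\<lambda>\<alpha>::real. \<alpha>) \<longlongrightarrow> 0) (at_right 0)" by (rule tendsto_ident_at)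
  show ?case
  proof (cases "k = 0")
    case True
    show ?thesis
      by (simp only: bpstate.simps Let_def True if_True) (intro tendsto_intros e th a Suc.IH)
  next
    case False
    show ?thesis
      by (simp only: bpstate.simps Let_def False if_False) (intro tendsto_intros e th a Suc.IH)
  qed
qed

lemma snd_BS0: "snd (BS 0 k) = \<theta>0"
  by (induction k) (simp_all add: Let_def)

abbreviation "dBP \<alpha> k \<equiv> transpose (fst (BS \<alpha> (Suc k))) *v
   (dL f x h0 ell (k+1) k + \<gamma> *\<^sub>R (transpose (dh f x h0 (k+1) k) *v g (hid f x h0 (k+1)) (snd (BS \<alpha> k)))
     - g (hid f x h0 k) (snd (BS \<alpha> k)))"

lemma BS_step: "snd (BS \<alpha> (Suc k)) = snd (BS \<alpha> k) + \<alpha> *\<^sub>R dBP \<alpha> k"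
  by (simp only: bpstate.simps Let_def prod.sel)

lemma BS_sum: "snd (BS \<alpha> n) = \<theta>0 + \<alpha> *\<^sub>R (\<Sum>k<n. dBP \<alpha> k)"
proof (induction n)
  case 0 then show ?case by simp
next
  case (Suc n) then show ?case by (simp only: BS_step sum.lessThan_Suc scaleR_right_distrib add.assoc)
qed

lemma dBP_lim: "((\<lambda>\<alpha>. dBP \<alpha> k) \<longlongrightarrow> dBP 0 k) (at_right 0)"
proof -
  have e: "((\<lambda>\<alpha>. fst (BS \<alpha> (Suc k))) \<longlongrightarrow> fst (BS 0 (Suc k))) (at_right 0)"
    and th: "((\<lambda>\<alpha>. snd (BS \<alpha> k)) \<longlongrightarrow> snd (BS 0 k)) (at_right 0)"
    by (rule tendsto_fst[OF BS_cont], rule tendsto_snd[OF BS_cont])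
  show ?thesis by (intro tendsto_intros e th BS_cont)
qed

lemma fst_BS_Suc: "fst (BS \<alpha> (Suc k)) = (if k = 0 then dg g (hid f x h0 k) (snd (BS \<alpha> k))
   else (\<gamma>*lam) *\<^sub>R (dh f x h0 k (k-1) ** fst (BS \<alpha> k)) + dg g (hid f x h0 k) (snd (BS \<alpha> k)))"
  by (simp only: bpstate.simps(2) Let_def prod.sel)

lemma dhc: "i \<le> k \<Longrightarrow> k \<le> \<tau> \<Longrightarrow> \<tau> \<le> T \<Longrightarrow> dh f x h0 \<tau> i = dh f x h0 \<tau> k ** dh f x h0 k i"
  using dh_comp[where T=T and f=f and x=x and ell=ell, OF f_diff ell_diff] by blast

lemma dLc: "i \<le> k \<Longrightarrow> k \<le> \<tau> \<Longrightarrow> \<tau> \<le> T \<Longrightarrow> 1 \<le> \<tau> \<Longrightarrow>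
   dL f x h0 ell \<tau> i = transpose (dh f x h0 k i) *v dL f x h0 ell \<tau> k"
  using dL_comp[where T=T and f=f and x=x and ell=ell, OF f_diff ell_diff] by blast

lemma tmv_id: "transpose (dh f x h0 i i) *v v = v"
  using dh_id[where T=T and f=f and x=x and ell=ell, OF f_diff ell_diff]
  by (simp del: transpose_matrix_vector)

lemma e0_act: "k < T \<Longrightarrow> transpose (fst (BS 0 (Suc k))) *v v =
   (\<Sum>i\<le>k. (\<gamma>*lam)^(k-i) *\<^sub>R (transpose (dg g (hid f x h0 i) \<theta>0) *v (transpose (dh f x h0 k i) *v v)))"
proof (induction k arbitrary: v)
  case 0
  show ?case by (simp del: transpose_matrix_vector add: fst_BS_Suc snd_BS0 tmv_id)
next
  case (Suc k)
  let ?c = "\<gamma>*lam"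
  have "transpose (fst (BS 0 (Suc (Suc k)))) *v v =
     ?c *\<^sub>R (transpose (fst (BS 0 (Suc k))) *v (transpose (dh f x h0 (Suc k) k) *v v))
     + transpose (dg g (hid f x h0 (Suc k)) \<theta>0) *v v"
    by (simp del: transpose_matrix_vector add: fst_BS_Suc[of 0 "Suc k"] snd_BS0 tmv_add tmv_scale tmv_mul)
  also have "\<dots> = ?c *\<^sub>R (\<Sum>i\<le>k. ?c^(k-i) *\<^sub>R (transpose (dg g (hid f x h0 i) \<theta>0) *v (transpose (dh f x h0 (Suc k) i) *v v)))
     + transpose (dg g (hid f x h0 (Suc k)) \<theta>0) *v v"
  proof -
    have "transpose (dh f x h0 k i) *v (transpose (dh f x h0 (Suc k) k) *v v) = transpose (dh f x h0 (Suc k) i) *v v"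
      if "i \<le> k" for i
      using dhc[of i k "Suc k"] that Suc.prems tmv_mul[symmetric] by simp
    then show ?thesis using Suc by (simp del: transpose_matrix_vector)
  qed
  also have "\<dots> = (\<Sum>i\<le>Suc k. ?c^(Suc k-i) *\<^sub>R (transpose (dg g (hid f x h0 i) \<theta>0) *v (transpose (dh f x h0 (Suc k) i) *v v)))"
  proof -
    have "?c *\<^sub>R ?c^(k-i) = ?c^(Suc k - i)" if "i \<le> k" for i
      using that by (simp add: Suc_diff_le)
    then show ?thesis
      by (simp del: transpose_matrix_vector add: scaleR_sum_right tmv_id)
  qed
  finally show ?case .
qed

lemma sum_shift_ivl: fixes F :: "nat \<Rightarrow> 'a::comm_monoid_add" shows "i \<le> t \<Longrightarrow> (\<Sum>k\<in>{i..<t}. F k) = (\<Sum>m<t-i. F (i+m))"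
  using sum.shift_bounds_nat_ivl[of F 0 i "t-i"] by (simp add: lessThan_atLeast0 add.commute)

abbreviation "del0 k \<equiv> dL f x h0 ell (k+1) k + \<gamma> *\<^sub>R (transpose (dh f x h0 (k+1) k) *v g (hid f x h0 (k+1)) \<theta>0)
     - g (hid f x h0 k) \<theta>0"

lemma transport: "i + m < T \<Longrightarrow> transpose (dh f x h0 (i+m) i) *v del0 (i+m) =
   dL f x h0 ell (i + Suc m) i + \<gamma> *\<^sub>R (transpose (dh f x h0 (i + Suc m) i) *v g (hid f x h0 (i + Suc m)) \<theta>0)
   - transpose (dh f x h0 (i+m) i) *v g (hid f x h0 (i+m)) \<theta>0"
proof -
  assume a: "i + m < T"
  have 1: "transpose (dh f x h0 (i+m) i) *v dL f x h0 ell (Suc (i+m)) (i+m) = dL f x h0 ell (Suc (i+m)) i"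
    using dLc[of i "i+m" "i+m+1"] a by simp
  have 2: "transpose (dh f x h0 (i+m) i) *v (transpose (dh f x h0 (Suc (i+m)) (i+m)) *v w) =
      transpose (dh f x h0 (Suc (i+m)) i) *v w" for w
    using dhc[of i "i+m" "i+m+1"] a tmv_mul[symmetric] by simp
  show ?thesis
    by (simp del: transpose_matrix_vector add: matrix_vector_right_distrib matrix_vector_mult_diff_distrib mv_scale 1 2)
qed

lemma Glam_eq: "i < t \<Longrightarrow> t \<le> T \<Longrightarrow>
  Glam f x h0 ell g \<gamma> lam (\<lambda>j. \<theta>0) i t - g (hid f x h0 i) \<theta>0 =
  (\<Sum>m<t-i. (\<gamma>*lam)^m *\<^sub>R (transpose (dh f x h0 (i+m) i) *v del0 (i+m)))"
proof -
  assume a: "i < t" "t \<le> T"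
  define r where "r = (\<lambda>\<tau>. dL f x h0 ell (i+\<tau>) i)"
  define u where "u = (\<lambda>n. transpose (dh f x h0 (i+n) i) *v g (hid f x h0 (i+n)) \<theta>0)"
  obtain N where N: "t - i = Suc N" using a by (metis Suc_diff_Suc)
  have u0: "u 0 = g (hid f x h0 i) \<theta>0" unfolding u_def using tmv_id by simp
  have G: "Gn f x h0 ell g \<gamma> (\<lambda>j. \<theta>0) i n = (\<Sum>\<tau>=1..n. \<gamma>^(\<tau>-1) *\<^sub>R r \<tau>) + \<gamma>^n *\<^sub>R u n" for n
    unfolding Gn_def r_def u_def by simp
  have "Glam f x h0 ell g \<gamma> lam (\<lambda>j. \<theta>0) i t - g (hid f x h0 i) \<theta>0 =
     (\<Sum>m<Suc N. (\<gamma>*lam)^m *\<^sub>R (r (Suc m) + \<gamma> *\<^sub>R u (Suc m) - u m))"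
    unfolding Glam_def G u0[symmetric] using N lam_return[of lam \<gamma> r u N] by simp
  also have "\<dots> = (\<Sum>m<t-i. (\<gamma>*lam)^m *\<^sub>R (transpose (dh f x h0 (i+m) i) *v del0 (i+m)))"
    unfolding N[symmetric] r_def u_def
    by (intro sum.cong refl, subst transport) (use a in auto)
  finally show ?thesis .
qed

lemma SBP: "t \<le> T \<Longrightarrow> (\<Sum>k<t. dBP 0 k) = (\<Sum>i<t. Delta f x h0 ell g \<gamma> lam \<theta>0 i t)"
proof -
  assume a: "t \<le> T"
  let ?c = "\<gamma>*lam"
  have "(\<Sum>k<t. dBP 0 k) = (\<Sum>k<t. \<Sum>i\<le>k. ?c^(k-i) *\<^sub>R (transpose (dg g (hid f x h0 i) \<theta>0) *v (transpose (dh f x h0 k i) *v del0 k)))"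
  proof (intro sum.cong refl)
    fix k assume "k \<in> {..<t}"
    then have "k < T" using a by simp
    then show "dBP 0 k = (\<Sum>i\<le>k. ?c^(k-i) *\<^sub>R (transpose (dg g (hid f x h0 i) \<theta>0) *v (transpose (dh f x h0 k i) *v del0 k)))"
      by (simp only: snd_BS0 e0_act)
  qed
  also have "\<dots> = (\<Sum>i<t. \<Sum>k\<in>{i..<t}. ?c^(k-i) *\<^sub>R (transpose (dg g (hid f x h0 i) \<theta>0) *v (transpose (dh f x h0 k i) *v del0 k)))"
    by (rule sum_tri_swap)
  also have "\<dots> = (\<Sum>i<t. Delta f x h0 ell g \<gamma> lam \<theta>0 i t)"
  proof (intro sum.cong refl)
    fix i assume i: "i \<in> {..<t}"
    have "(\<Sum>k\<in>{i..<t}. ?c^(k-i) *\<^sub>R (transpose (dg g (hid f x h0 i) \<theta>0) *v (transpose (dh f x h0 k i) *v del0 k)))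
       = transpose (dg g (hid f x h0 i) \<theta>0) *v (\<Sum>k\<in>{i..<t}. ?c^(k-i) *\<^sub>R (transpose (dh f x h0 k i) *v del0 k))"
      by (simp del: transpose_matrix_vector add: mv_sum mv_scale)
    also have "\<dots> = transpose (dg g (hid f x h0 i) \<theta>0) *v (\<Sum>m<t-i. ?c^m *\<^sub>R (transpose (dh f x h0 (i+m) i) *v del0 (i+m)))"
      using i by (simp del: transpose_matrix_vector add: sum_shift_ivl)
    also have "\<dots> = Delta f x h0 ell g \<gamma> lam \<theta>0 i t"
      unfolding Delta_def using Glam_eq[of i t] i a by (simp del: transpose_matrix_vector)
    finally show "(\<Sum>k\<in>{i..<t}. ?c^(k-i) *\<^sub>R (transpose (dg g (hid f x h0 i) \<theta>0) *v (transpose (dh f x h0 k i) *v del0 k)))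
       = Delta f x h0 ell g \<gamma> lam \<theta>0 i t" .
  qed
  finally show ?thesis .
qed

abbreviation "SI \<alpha> s V k \<equiv> sginner f x h0 ell g \<gamma> lam \<alpha> \<theta>0 s V k"
abbreviation "QQ \<alpha> s V j \<equiv> transpose (dg g (hid f x h0 j) (SI \<alpha> s V j)) *v
   (Glam f x h0 ell g \<gamma> lam V j s - g (hid f x h0 j) (SI \<alpha> s V j))"

lemma SI_step: "SI \<alpha> s V (Suc k) = SI \<alpha> s V k + \<alpha> *\<^sub>R QQ \<alpha> s V k"
  by (simp only: sginner.simps(2) Let_def)

lemma SI_sum: "SI \<alpha> s V k = \<theta>0 + \<alpha> *\<^sub>R (\<Sum>j<k. QQ \<alpha> s V j)"
proof (induction k)
  case 0 then show ?case by simp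
next
  case (Suc k) then show ?case by (simp only: SI_step sum.lessThan_Suc scaleR_right_distrib add.assoc)
qed

lemma Glam_lim:
  assumes V: "\<And>j. ((\<lambda>\<alpha>. V \<alpha> j) \<longlongrightarrow> \<theta>0) F"
  shows "((\<lambda>\<alpha>. Glam f x h0 ell g \<gamma> lam (V \<alpha>) k s) \<longlongrightarrow> Glam f x h0 ell g \<gamma> lam (\<lambda>j. \<theta>0) k s) F"
  by (simp only: Glam_def Gn_def) (intro tendsto_intros V)

lemma SI_lim:
  assumes V: "\<And>j. ((\<lambda>\<alpha>. V \<alpha> j) \<longlongrightarrow> \<theta>0) (at_right 0)"
  shows "((\<lambda>\<alpha>. SI \<alpha> s (V \<alpha>) j) \<longlongrightarrow> \<theta>0) (at_right 0) \<and>
         ((\<lambda>\<alpha>. QQ \<alpha> s (V \<alpha>) j) \<longlongrightarrow> Delta f x h0 ell g \<gamma> lam \<theta>0 j s) (at_right 0)"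
proof (induction j rule: less_induct)
  case (less j)
  have S: "((\<lambda>\<alpha>. \<Sum>i<j. QQ \<alpha> s (V \<alpha>) i) \<longlongrightarrow> (\<Sum>i<j. Delta f x h0 ell g \<gamma> lam \<theta>0 i s)) (at_right 0)"
    by (rule tendsto_sum) (use less in blast)
  have a: "((\<lambda>\<alpha>::real. \<alpha>) \<longlongrightarrow> 0) (at_right 0)" by (rule tendsto_ident_at)
  have "((\<lambda>\<alpha>. \<theta>0 + \<alpha> *\<^sub>R (\<Sum>i<j. QQ \<alpha> s (V \<alpha>) i)) \<longlongrightarrow> \<theta>0 + 0 *\<^sub>R (\<Sum>i<j. Delta f x h0 ell g \<gamma> lam \<theta>0 i s)) (at_right 0)"
    by (rule tendsto_add[OF tendsto_const tendsto_scaleR[OF a S]])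
  moreover have eq: "(\<lambda>\<alpha>. SI \<alpha> s (V \<alpha>) j) = (\<lambda>\<alpha>. \<theta>0 + \<alpha> *\<^sub>R (\<Sum>i<j. QQ \<alpha> s (V \<alpha>) i))"
    by (rule ext) (rule SI_sum)
  ultimately have th: "((\<lambda>\<alpha>. SI \<alpha> s (V \<alpha>) j) \<longlongrightarrow> \<theta>0) (at_right 0)"
    by (simp only: scaleR_zero_left add_0_right)
  have "((\<lambda>\<alpha>. QQ \<alpha> s (V \<alpha>) j) \<longlongrightarrow> Delta f x h0 ell g \<gamma> lam \<theta>0 j s) (at_right 0)"
    unfolding Delta_def
    by (rule tendsto_mv[OF tendsto_transpose[OF dg_tendsto[OF th]] tendsto_diff[OF Glam_lim[OF V] g_tendsto[OF th]]])
  with th show ?case by blast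
qed

abbreviation "SQ \<alpha> n \<equiv> sgseq f x h0 ell g \<gamma> lam \<alpha> \<theta>0 n"

lemma SQ_Suc: "SQ \<alpha> (Suc n) i = (if i = Suc n then SI \<alpha> (Suc n) (SQ \<alpha> n) (Suc n) else SQ \<alpha> n i)"
  by (simp only: sgseq.simps(2) Let_def fun_upd_apply)

lemma SQ_lim: "((\<lambda>\<alpha>. SQ \<alpha> n i) \<longlongrightarrow> \<theta>0) (at_right 0)"
proof (induction n arbitrary: i)
  case 0 then show ?case by simp
next
  case (Suc n)
  show ?case
  proof (cases "i = Suc n")
    case True
    then show ?thesis using SI_lim[of "\<lambda>\<alpha>. SQ \<alpha> n" "Suc n" "Suc n"] Suc by (simp only: SQ_Suc if_True simp_thms)
  next
    case False
    then show ?thesis using Suc by (simp only: SQ_Suc if_False)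
  qed
qed

lemma main:
  assumes t: "1 \<le> t" "t \<le> T"
    and nz: "\<And>j. (\<Sum>i<t. Delta f x h0 ell g \<gamma> lam \<theta>0 i t) $ j \<noteq> 0"
  shows "((\<lambda>\<alpha>. norm (thetaBP f x h0 ell g \<gamma> lam \<alpha> \<theta>0 t - thetaLam f x h0 ell g \<gamma> lam \<alpha> \<theta>0 t)
                / norm (thetaBP f x h0 ell g \<gamma> lam \<alpha> \<theta>0 t - \<theta>0))
          \<longlongrightarrow> 0) (at_right 0)"
proof -
  obtain m where m: "t = Suc m" using t by (cases t) auto
  define S where "S = (\<Sum>i<t. Delta f x h0 ell g \<gamma> lam \<theta>0 i t)"
  define XB where "XB = (\<lambda>\<alpha>. \<Sum>k<t. dBP \<alpha> k)"
  define XL where "XL = (\<lambda>\<alpha>. \<Sum>j<t. QQ \<alpha> t (SQ \<alpha> m) j)"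
  have BPeq: "thetaBP f x h0 ell g \<gamma> lam \<alpha> \<theta>0 t = \<theta>0 + \<alpha> *\<^sub>R XB \<alpha>" for \<alpha>
    unfolding thetaBP_def XB_def by (rule BS_sum)
  have Leq: "thetaLam f x h0 ell g \<gamma> lam \<alpha> \<theta>0 t = \<theta>0 + \<alpha> *\<^sub>R XL \<alpha>" for \<alpha>
  proof -
    have "thetaLam f x h0 ell g \<gamma> lam \<alpha> \<theta>0 t = SI \<alpha> t (SQ \<alpha> m) t"
      unfolding thetaLam_def m by (simp only: SQ_Suc if_True simp_thms)
    then show ?thesis unfolding XL_def by (simp only: SI_sum[of \<alpha> t "SQ \<alpha> m" t])
  qed
  have XB: "(XB \<longlongrightarrow> S) (at_right 0)"
  proof -
    have "(XB \<longlongrightarrow> (\<Sum>k<t. dBP 0 k)) (at_right 0)"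
      unfolding XB_def by (intro tendsto_sum dBP_lim)
    then show ?thesis using SBP[OF t(2)] S_def by simp
  qed
  have XL: "(XL \<longlongrightarrow> S) (at_right 0)"
    unfolding XL_def S_def
    by (intro tendsto_sum) (use SI_lim[of "\<lambda>\<alpha>. SQ \<alpha> m" t] SQ_lim in blast)
  have S0: "norm S \<noteq> 0" using nz[of undefined] unfolding S_def by (metis norm_eq_zero zero_index)
  have "((\<lambda>\<alpha>. norm (XB \<alpha> - XL \<alpha>) / norm (XB \<alpha>)) \<longlongrightarrow> norm (S - S) / norm S) (at_right 0)"
    by (intro tendsto_intros XB XL S0)
  then have lim: "((\<lambda>\<alpha>. norm (XB \<alpha> - XL \<alpha>) / norm (XB \<alpha>)) \<longlongrightarrow> 0) (at_right 0)" by simp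
  have ev: "\<forall>\<^sub>F \<alpha> in at_right 0. norm (XB \<alpha> - XL \<alpha>) / norm (XB \<alpha>) =
     norm (thetaBP f x h0 ell g \<gamma> lam \<alpha> \<theta>0 t - thetaLam f x h0 ell g \<gamma> lam \<alpha> \<theta>0 t)
                / norm (thetaBP f x h0 ell g \<gamma> lam \<alpha> \<theta>0 t - \<theta>0)"
    using eventually_at_right_less[of "0::real"]
  proof (rule eventually_mono)
    fix \<alpha> :: real assume "0 < \<alpha>"
    then show "norm (XB \<alpha> - XL \<alpha>) / norm (XB \<alpha>) =
     norm (thetaBP f x h0 ell g \<gamma> lam \<alpha> \<theta>0 t - thetaLam f x h0 ell g \<gamma> lam \<alpha> \<theta>0 t)
                / norm (thetaBP f x h0 ell g \<gamma> lam \<alpha> \<theta>0 t - \<theta>0)"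
      unfolding BPeq Leq by (simp add: scaleR_diff_right[symmetric])
  qed
  show ?thesis using tendsto_cong[OF ev] lim by blast
qed

end

theorem theorem1:
  fixes f :: "'x \<Rightarrow> real^'d \<Rightarrow> real^'d"
    and x :: "nat \<Rightarrow> 'x"
    and h0 :: "real^'d"
    and ell :: "nat \<Rightarrow> real^'d \<Rightarrow> real"
    and g :: "real^'d \<Rightarrow> real^'p \<Rightarrow> real^'d"
    and \<gamma> lam :: real
    and \<theta>0 :: "real^'p"
    and T t :: nat
  assumes f_diff: "\<And>\<tau> z. \<tau> \<in> {1..T} \<Longrightarrow> f (x \<tau>) differentiable (at z)"
    and ell_diff: "\<And>\<tau> z. \<tau> \<in> {1..T} \<Longrightarrow> ell \<tau> differentiable (at z)"
    and g_diff: "\<And>h \<theta>. g h differentiable (at \<theta>)"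
    and g_C1: "\<And>h. continuous_on UNIV (\<lambda>\<theta>. dg g h \<theta>)"
    and \<gamma>: "0 \<le> \<gamma>" "\<gamma> \<le> 1"
    and lam: "0 \<le> lam" "lam \<le> 1"
    and t: "1 \<le> t" "t \<le> T"
    and nz: "\<And>j. (\<Sum>i<t. Delta f x h0 ell g \<gamma> lam \<theta>0 i t) $ j \<noteq> 0"
  shows "((\<lambda>\<alpha>. norm (thetaBP f x h0 ell g \<gamma> lam \<alpha> \<theta>0 t - thetaLam f x h0 ell g \<gamma> lam \<alpha> \<theta>0 t)
                / norm (thetaBP f x h0 ell g \<gamma> lam \<alpha> \<theta>0 t - \<theta>0))
          \<longlongrightarrow> 0) (at_right 0)"
  by (rule main[where f=f and x=x and ell=ell and g=g and \<gamma>=\<gamma> and lam=lam and T=T,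
        OF f_diff ell_diff g_diff g_C1 t nz])

end
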